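(* Let $P\subset\mathbb R^2$ be a convex lattice polygon with nonzero area $A(P)$ and $h=\operatorname{ls}_\square(P)$. Then $A(P)\ge\frac12 h$, with equality if and only if $P$ is lattice-equivalent to $\operatorname{conv}\{(0,0),(h,0),(0,1)\}$.
   Context: A lattice polygon is a convex polygon all of whose vertices lie in $\mathbb Z^2$. An affine unimodular transformation is $x\mapsto Ax+v$ with $A\in\mathbb Z^{2\times2}$, $\det A=\pm1$, $v\in\mathbb Z^2$; two sets are lattice-equivalent if one is the image of the other under such a map. With $\square=[0,1]^2$, $\operatorname{ls}_\square(P)$ is the smallest $l\ge0$ such that $\varphi(P)\subseteq l\square$ for some affine unimodular $\varphi$. *)

theory Defs
  imports "HOL-Analysis.Analysis"
begin

definition lattice_point :: "real \<times> real \<Rightarrow> bool" where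
  "lattice_point p \<longleftrightarrow> fst p \<in> \<int> \<and> snd p \<in> \<int>"

definition lattice_polygon :: "(real \<times> real) set \<Rightarrow> bool" where
  "lattice_polygon P \<longleftrightarrow> (\<exists>V. finite V \<and> (\<forall>v\<in>V. lattice_point v) \<and> P = convex hull V)"

text \<open>Affine map x \<mapsto> A x + v with A = ((a,b),(c,d)) integral and v = (e,f) integral.\<close>
definition aff_map :: "int \<Rightarrow> int \<Rightarrow> int \<Rightarrow> int \<Rightarrow> int \<Rightarrow> int \<Rightarrow> real \<times> real \<Rightarrow> real \<times> real" where
  "aff_map a b c d e f p =
     (of_int a * fst p + of_int b * snd p + of_int e,
      of_int c * fst p + of_int d * snd p + of_int f)"

definition affine_unimodular :: "(real \<times> real \<Rightarrow> real \<times> real) \<Rightarrow> bool" where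
  "affine_unimodular \<phi> \<longleftrightarrow>
     (\<exists>a b c d e f. \<bar>a * d - b * c\<bar> = 1 \<and> \<phi> = aff_map a b c d e f)"

definition lattice_equivalent :: "(real \<times> real) set \<Rightarrow> (real \<times> real) set \<Rightarrow> bool" where
  "lattice_equivalent P Q \<longleftrightarrow> (\<exists>\<phi>. affine_unimodular \<phi> \<and> \<phi> ` P = Q)"

definition scaled_square :: "real \<Rightarrow> (real \<times> real) set" where
  "scaled_square l = {p. 0 \<le> fst p \<and> fst p \<le> l \<and> 0 \<le> snd p \<and> snd p \<le> l}"

definition ls_square :: "(real \<times> real) set \<Rightarrow> real" where
  "ls_square P = Inf {l. 0 \<le> l \<and> (\<exists>\<phi>. affine_unimodular \<phi> \<and> \<phi> ` P \<subseteq> scaled_square l)}"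

definition area :: "(real \<times> real) set \<Rightarrow> real" where
  "area P = measure lborel P"

end

theory Submission
  imports Defs "HOL-Analysis.Analysis"
begin

definition tau :: "real^2 \<Rightarrow> real \<times> real" where "tau v = (v$1, v$2)"

lemma Basis_vec2: "(Basis :: (real^2) set) = {axis 1 1, axis 2 1}"
  unfolding Basis_vec_def apply auto
  by (metis exhaust_2)

lemma axis_neq: "axis (1::2) (1::real) \<noteq> axis 2 1"
  by (simp add: axis_eq_axis)

lemma tau_meas[measurable]: "tau \<in> borel_measurable borel"
  unfolding tau_def by measurable

lemma lborel_tau: "lborel = distr lborel borel tau"
proof (rule lborel_eqI)
  fix l u :: "real \<times> real"
  assume le: "\<And>b. b \<in> Basis \<Longrightarrow> l \<bullet> b \<le> u \<bullet> b"
  have l1: "fst l \<le> fst u" and l2: "snd l \<le> snd u"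
    using le[of "(1,0)"] le[of "(0,1)"] by (cases l; cases u; auto simp: Basis_prod_def inner_prod_def)+
  have eq: "tau -` box l u = box (vector [fst l, snd l]) (vector [fst u, snd u])"
    by (cases l; cases u) (auto simp: tau_def mem_box_cart forall_2 mem_box Basis_prod_def inner_prod_def)
  have "emeasure (distr lborel borel tau) (box l u) = emeasure lborel (tau -` box l u)"
    by (subst emeasure_distr) auto
  also have "\<dots> = ennreal ((fst u - fst l) * (snd u - snd l))"
    unfolding eq using l1 l2
    by (subst emeasure_lborel_box) (auto simp: Basis_vec2 axis_neq inner_axis)
  also have "\<dots> = (\<Prod>b\<in>Basis. (u - l) \<bullet> b)"
    by (cases l; cases u) (simp add: Basis_prod_def inner_prod_def mult.commute)
  finally show "emeasure (distr lborel borel tau) (box l u) = (\<Prod>b\<in>Basis. (u - l) \<bullet> b)" .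
qed simp

definition sig :: "real \<times> real \<Rightarrow> real^2" where "sig p = vector [fst p, snd p]"

lemma linear_sig: "linear sig"
  by (rule linearI) (auto simp: sig_def vec_eq_iff forall_2)

lemma tau_vimage: "tau -` S = sig ` S"
proof -
  have "tau (sig p) = p" for p by (cases p) (simp add: tau_def sig_def)
  moreover have "sig (tau v) = v" for v by (simp add: tau_def sig_def vec_eq_iff forall_2)
  ultimately show ?thesis by (auto simp: image_iff) (metis)
qed

lemma measure_tau: assumes "S \<in> sets borel" shows "measure lborel S = measure lborel (sig ` S)"
proof -
  have "measure lborel S = measure (distr lborel borel tau) S" using lborel_tau by simp
  also have "\<dots> = measure lborel (tau -` S)" using assms by (subst measure_distr) auto
  finally show ?thesis by (simp add: tau_vimage)
qed

definition det2 :: "real \<times> real \<Rightarrow> real \<times> real \<Rightarrow> real" where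
  "det2 u v = fst u * snd v - snd u * fst v"

lemma area_triangle:
  fixes a b c :: "real \<times> real"
  shows "measure lborel (convex hull {a, b, c}) = \<bar>det2 (b - a) (c - a)\<bar> / 2"
proof -
  have cl: "convex hull {a,b,c} \<in> sets borel"
    by (intro borel_closed compact_imp_closed finite_imp_compact_convex_hull) auto
  have "measure lborel (convex hull {a, b, c}) = measure lborel (sig ` (convex hull {a,b,c}))"
    by (rule measure_tau[OF cl])
  also have "sig ` (convex hull {a,b,c}) = convex hull {sig a, sig b, sig c}"
    by (simp add: convex_hull_linear_image[OF linear_sig])
  also have "measure lborel \<dots> = \<bar>det2 (b - a) (c - a)\<bar> / 2"
    unfolding content_triangle by (simp add: sig_def det2_def abs_minus_commute algebra_simps)
  finally show ?thesis .
qed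

lemma null_borel: assumes "compact S" "negligible S" shows "measure lborel S = 0"
proof -
  have "measure lebesgue S = measure lborel S"
    using assms(1) by (simp add: borel_compact)
  thus ?thesis using negligible_imp_measure0[OF assms(2)] by simp
qed

lemma det2_inner: "det2 (b - a) (x - a) = (- snd (b - a), fst (b - a)) \<bullet> x - (- snd (b - a), fst (b - a)) \<bullet> a"
  by (simp add: det2_def inner_prod_def algebra_simps)

lemma area_quad:
  fixes a b c d :: "real \<times> real"
  assumes P: "compact P" "convex P" and ins: "a \<in> P" "b \<in> P" "c \<in> P" "d \<in> P"
    and s: "det2 (b - a) (c - a) \<ge> 0" "det2 (b - a) (d - a) \<le> 0"
  shows "measure lborel P \<ge> (det2 (b - a) (c - a) - det2 (b - a) (d - a)) / 2"
proof (cases "b = a")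
  case True
  then show ?thesis by (simp add: det2_def)
next
  case False
  define n where "n = (- snd (b - a), fst (b - a))"
  have n0: "n \<noteq> 0" using False by (cases a; cases b) (auto simp: n_def zero_prod_def)
  define T1 where "T1 = convex hull {a,b,c}"
  define T2 where "T2 = convex hull {a,b,d}"
  have c1: "compact T1" "compact T2" unfolding T1_def T2_def
    by (auto intro: finite_imp_compact_convex_hull)
  have sub: "T1 \<union> T2 \<subseteq> P" unfolding T1_def T2_def using ins P(2)
    by (simp add: hull_minimal)
  have nd: "n \<bullet> x - n \<bullet> a = det2 (b - a) (x - a)" for x by (simp add: n_def det2_inner)
  have z: "det2 (b - a) (a - a) = 0" "det2 (b - a) (b - a) = 0" by (simp_all add: det2_def)
  have h1: "T1 \<subseteq> {x. n \<bullet> x \<ge> n \<bullet> a}" unfolding T1_def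
    using s(1) nd[of a] nd[of b] nd[of c] z by (intro hull_minimal) (simp_all add: convex_halfspace_ge)
  have h2: "T2 \<subseteq> {x. n \<bullet> x \<le> n \<bullet> a}" unfolding T2_def
    using s(2) nd[of a] nd[of b] nd[of d] z by (intro hull_minimal) (simp_all add: convex_halfspace_le)
  have "T1 \<inter> T2 \<subseteq> {x. n \<bullet> x = n \<bullet> a}" using h1 h2 by force
  hence neg: "negligible (T1 \<inter> T2)"
    using negligible_hyperplane[of n "n \<bullet> a"] n0 negligible_subset by blast
  have m0: "measure lborel (T1 \<inter> T2) = 0"
    by (rule null_borel) (use c1 neg in auto)
  have "measure lborel (T1 \<union> T2) = measure lborel T1 + measure lborel T2"
    using measure_Un3[OF fmeasurable_compact[OF c1(1)] fmeasurable_compact[OF c1(2)]] m0 by simp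
  also have "measure lborel T1 = \<bar>det2 (b - a) (c - a)\<bar> / 2" unfolding T1_def by (rule area_triangle)
  also have "measure lborel T2 = \<bar>det2 (b - a) (d - a)\<bar> / 2" unfolding T2_def by (rule area_triangle)
  finally have eq: "measure lborel (T1 \<union> T2) = (det2 (b - a) (c - a) - det2 (b - a) (d - a)) / 2"
    using s by simp
  have "measure lborel (T1 \<union> T2) \<le> measure lborel P"
    by (rule measure_mono_fmeasurable[OF sub]) (use c1 P(1) in \<open>auto intro: fmeasurable_compact borel_compact\<close>)
  thus ?thesis using eq by simp
qed

type_synonym ip = "int \<times> int"

definition aff :: "int \<Rightarrow> int \<Rightarrow> int \<Rightarrow> int \<Rightarrow> int \<Rightarrow> int \<Rightarrow> ip \<Rightarrow> ip" where
  "aff a b c d e f p = (a * fst p + b * snd p + e, c * fst p + d * snd p + f)"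

definition DD :: "ip \<Rightarrow> ip \<Rightarrow> ip \<Rightarrow> int" where
  "DD p q v = (fst q - fst p) * (snd v - snd p) - (snd q - snd p) * (fst v - fst p)"

definition inbox :: "int \<Rightarrow> ip \<Rightarrow> bool" where
  "inbox l p \<longleftrightarrow> 0 \<le> fst p \<and> fst p \<le> l \<and> 0 \<le> snd p \<and> snd p \<le> l"

definition unimod :: "int \<Rightarrow> int \<Rightarrow> int \<Rightarrow> int \<Rightarrow> bool" where
  "unimod a b c d \<longleftrightarrow> \<bar>a*d - b*c\<bar> = 1"

definition BOXP :: "ip set \<Rightarrow> int \<Rightarrow> bool" where
  "BOXP V l \<longleftrightarrow> (\<exists>a b c d e f. unimod a b c d \<and> (\<forall>v\<in>V. inbox l (aff a b c d e f v)))"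

definition ALTA :: "ip set \<Rightarrow> int \<Rightarrow> bool" where
  "ALTA V l \<longleftrightarrow> (\<exists>p\<in>V. \<exists>q\<in>V. \<exists>c\<in>V. \<exists>d\<in>V. DD p q c - DD p q d > l)"

definition TRI :: "ip set \<Rightarrow> int \<Rightarrow> (ip \<Rightarrow> ip) \<Rightarrow> bool" where
  "TRI V l h \<longleftrightarrow> h (0,0) \<in> V \<and> h (l,0) \<in> V \<and> h (0,1) \<in> V \<and>
      (\<forall>v\<in>V. v = h (0,1) \<or> (\<exists>x. 0 \<le> x \<and> x \<le> l \<and> v = h (x,0)))"

definition ALTB :: "ip set \<Rightarrow> int \<Rightarrow> bool" where
  "ALTB V l \<longleftrightarrow> l \<ge> 1 \<and> (\<exists>a b c d e f. unimod a b c d \<and> TRI V l (aff a b c d e f))"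

definition COMB :: "ip set \<Rightarrow> bool" where
  "COMB V \<longleftrightarrow> (\<exists>l\<ge>0. BOXP V l \<and> (ALTA V l \<or> ALTB V l))"

lemma TRI_inv: assumes "\<And>p. g (h p) = p" "TRI (h ` V) l k" shows "TRI V l (\<lambda>p. g (k p))"
proof -
  have a: "k (0,0) \<in> h ` V" "k (l,0) \<in> h ` V" "k (0,1) \<in> h ` V"
    and b: "\<forall>v\<in>h ` V. v = k (0,1) \<or> (\<exists>x. 0 \<le> x \<and> x \<le> l \<and> v = k (x,0))"
    using assms(2) unfolding TRI_def by blast+
  have "g (k (0,0)) \<in> V" "g (k (l,0)) \<in> V" "g (k (0,1)) \<in> V" using a assms(1) by auto
  moreover have "\<forall>v\<in>V. v = g (k (0,1)) \<or> (\<exists>x. 0 \<le> x \<and> x \<le> l \<and> v = g (k (x,0)))"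
  proof
    fix v assume "v \<in> V"
    hence "h v = k (0,1) \<or> (\<exists>x. 0 \<le> x \<and> x \<le> l \<and> h v = k (x,0))" using b by blast
    thus "v = g (k (0,1)) \<or> (\<exists>x. 0 \<le> x \<and> x \<le> l \<and> v = g (k (x,0)))" by (metis assms(1))
  qed
  ultimately show ?thesis unfolding TRI_def by blast
qed

lemma aff_comp: "aff a b c d e f (aff a' b' c' d' e' f' p) =
  aff (a*a'+b*c') (a*b'+b*d') (c*a'+d*c') (c*b'+d*d') (a*e'+b*f'+e) (c*e'+d*f'+f) p"
  by (simp add: aff_def algebra_simps)

lemma det_comp: "\<bar>(a::int)*d - b*c\<bar> = 1 \<Longrightarrow> \<bar>a'*d' - b'*c'\<bar> = 1 \<Longrightarrow>
  \<bar>(a*a'+b*c') * (c*b'+d*d') - (a*b'+b*d') * (c*a'+d*c')\<bar> = 1"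
proof -
  have "(a*a'+b*c') * (c*b'+d*d') - (a*b'+b*d') * (c*a'+d*c') = (a*d - b*c) * (a'*d' - b'*c')"
    by (simp add: algebra_simps)
  thus "\<bar>a*d - b*c\<bar> = 1 \<Longrightarrow> \<bar>a'*d' - b'*c'\<bar> = 1 \<Longrightarrow> ?thesis" by (simp add: abs_mult)
qed

lemma abs1_cases: "\<bar>x::int\<bar> = 1 \<Longrightarrow> x = 1 \<or> x = -1" by auto

lemma aff_inv:
  assumes "\<bar>a*d - b*c\<bar> = 1"
  defines "t \<equiv> a*d - b*c"
  shows "aff (t*d) (-t*b) (-t*c) (t*a) (t*(b*f - d*e)) (t*(c*e - a*f)) (aff a b c d e f p) = p"
    and "\<bar>(t*d)*(t*a) - (-t*b)*(-t*c)\<bar> = 1"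
proof -
  have tt: "t * t = 1" using abs1_cases[OF assms(1)] by (auto simp: t_def)
  have "t*d*(a * fst p + b * snd p + e) + -t*b*(c * fst p + d * snd p + f) + t*(b*f - d*e) = (t*t) * fst p"
    by (simp add: t_def algebra_simps)
  moreover have "-t*c*(a * fst p + b * snd p + e) + t*a*(c * fst p + d * snd p + f) + t*(c*e - a*f) = (t*t) * snd p"
    by (simp add: t_def algebra_simps)
  ultimately show "aff (t*d) (-t*b) (-t*c) (t*a) (t*(b*f - d*e)) (t*(c*e - a*f)) (aff a b c d e f p) = p"
    using tt by (simp add: aff_def prod_eq_iff)
  have "(t*d)*(t*a) - (-t*b)*(-t*c) = (t*t)*t" by (simp add: t_def algebra_simps)
  thus "\<bar>(t*d)*(t*a) - (-t*b)*(-t*c)\<bar> = 1" using tt assms(1) by (simp add: t_def)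
qed

lemma DD_aff: "DD (aff a b c d e f p) (aff a b c d e f q) (aff a b c d e f v) = (a*d - b*c) * DD p q v"
  unfolding DD_def aff_def by (simp, algebra)

locale inv_setup =
  fixes a b c d e f :: int
  assumes det: "\<bar>a*d - b*c\<bar> = 1"
begin

definition "t = a*d - b*c"
definition "g = aff (t*d) (-t*b) (-t*c) (t*a) (t*(b*f - d*e)) (t*(c*e - a*f))"
lemma gi: "g (aff a b c d e f p) = p" unfolding g_def t_def by (rule aff_inv(1)[OF det])
lemma gdet: "\<bar>(t*d)*(t*a) - (-t*b)*(-t*c)\<bar> = 1" unfolding t_def by (rule aff_inv(2)[OF det])

lemma BOXP_inv: assumes "BOXP (aff a b c d e f ` V) l" shows "BOXP V l"
proof -
  let ?h = "aff a b c d e f"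
  obtain a' b' c' d' e' f' where d0: "unimod a' b' c' d'" and
      h: "\<forall>v\<in>?h ` V. inbox l (aff a' b' c' d' e' f' v)"
    using assms unfolding BOXP_def by (elim exE conjE) (rule that)
  have d1: "\<bar>a'*d' - b'*c'\<bar> = 1" using d0 unfolding unimod_def .
  have eqc: "aff (a'*a+b'*c) (a'*b+b'*d) (c'*a+d'*c) (c'*b+d'*d) (a'*e+b'*f+e') (c'*e+d'*f+f') v = aff a' b' c' d' e' f' (?h v)" for v
    by (simp add: aff_comp)
  have "\<forall>v\<in>V. inbox l (aff (a'*a+b'*c) (a'*b+b'*d) (c'*a+d'*c) (c'*b+d'*d) (a'*e+b'*f+e') (c'*e+d'*f+f') v)"
    using h unfolding eqc by blast
  moreover have "unimod (a'*a+b'*c) (a'*b+b'*d) (c'*a+d'*c) (c'*b+d'*d)"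
    unfolding unimod_def by (rule det_comp[OF d1 det])
  ultimately show ?thesis unfolding BOXP_def by blast
qed

lemma ALTA_inv: assumes "ALTA (aff a b c d e f ` V) l" shows "ALTA V l"
proof -
  let ?h = "aff a b c d e f"
  from assms obtain p q c' d' where pq: "p \<in> V" "q \<in> V" "c' \<in> V" "d' \<in> V"
      and lt: "DD (?h p) (?h q) (?h c') - DD (?h p) (?h q) (?h d') > l" unfolding ALTA_def by blast
  have "a*d - b*c = 1 \<or> a*d - b*c = -1" using abs1_cases[OF det] .
  thus ?thesis
  proof
    assume tm: "a*d - b*c = 1"
    have "DD p q c' - DD p q d' > l" using lt unfolding DD_aff tm by simp
    thus ?thesis using pq unfolding ALTA_def by blast
  next
    assume tm: "a*d - b*c = -1"
    have "DD p q d' - DD p q c' > l" using lt unfolding DD_aff tm by simp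
    thus ?thesis using pq unfolding ALTA_def by blast
  qed
qed

lemma ALTB_inv: assumes "ALTB (aff a b c d e f ` V) l" shows "ALTB V l"
proof -
  let ?h = "aff a b c d e f"
  obtain a' b' c' d' e' f' where l1: "l \<ge> 1" and d0: "unimod a' b' c' d'" and
      T: "TRI (?h ` V) l (aff a' b' c' d' e' f')"
    using assms unfolding ALTB_def by (elim exE conjE) (rule that)
  have d1: "\<bar>a'*d' - b'*c'\<bar> = 1" using d0 unfolding unimod_def .
  have T2: "TRI V l (\<lambda>p. g (aff a' b' c' d' e' f' p))" by (rule TRI_inv[OF gi T])
  have eqc: "(\<lambda>p. g (aff a' b' c' d' e' f' p)) = aff ((t*d)*a'+(-t*b)*c') ((t*d)*b'+(-t*b)*d') ((-t*c)*a'+(t*a)*c') ((-t*c)*b'+(t*a)*d') ((t*d)*e'+(-t*b)*f'+(t*(b*f - d*e))) ((-t*c)*e'+(t*a)*f'+(t*(c*e - a*f)))"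
    unfolding g_def by (simp add: aff_comp fun_eq_iff)
  have "unimod ((t*d)*a'+(-t*b)*c') ((t*d)*b'+(-t*b)*d') ((-t*c)*a'+(t*a)*c') ((-t*c)*b'+(t*a)*d')"
    unfolding unimod_def by (rule det_comp[OF gdet d1])
  thus ?thesis using T2 l1 unfolding eqc ALTB_def by blast
qed
end

lemma COMB_inv:
  assumes det: "\<bar>a*d - b*c\<bar> = 1" and C: "COMB (aff a b c d e f ` V)"
  shows "COMB V"
proof -
  interpret inv_setup a b c d e f by standard (rule det)
  show ?thesis using C BOXP_inv ALTA_inv ALTB_inv unfolding COMB_def by blast
qed

definition WID :: "ip set \<Rightarrow> int \<Rightarrow> bool" where
  "WID V w \<longleftrightarrow> (\<forall>a b. (a,b) \<noteq> (0,0) \<longrightarrow> (\<exists>u\<in>V. \<exists>v\<in>V. a*(fst u - fst v) + b*(snd u - snd v) \<ge> w))"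

lemma ex_max: fixes F :: "ip \<Rightarrow> int" assumes "finite V" "x \<in> V" shows "\<exists>u\<in>V. \<forall>v\<in>V. F v \<le> F u"
proof -
  have "Max (F ` V) \<in> F ` V" using assms by (intro Max_in) auto
  then obtain u where "u \<in> V" "F u = Max (F ` V)" by auto
  moreover have "\<forall>v\<in>V. F v \<le> Max (F ` V)" using assms by auto
  ultimately show ?thesis by metis
qed

lemma ex_min: fixes F :: "ip \<Rightarrow> int" assumes "finite V" "x \<in> V" shows "\<exists>u\<in>V. \<forall>v\<in>V. F u \<le> F v"
proof -
  have "Min (F ` V) \<in> F ` V" using assms by (intro Min_in) auto
  then obtain u where "u \<in> V" "F u = Min (F ` V)" by auto
  moreover have "\<forall>v\<in>V. Min (F ` V) \<le> F v" using assms by auto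
  ultimately show ?thesis by metis
qed

lemma arith1: fixes w X G :: int assumes "w \<ge> 3" "X \<ge> w" "2*w*X \<le> 2*G + w*w" shows "G > X"
proof (rule ccontr)
  assume "\<not> G > X" hence "G \<le> X" by simp
  hence "2*w*X \<le> 2*X + w*w" using assms(3) by simp
  hence "2*X*(w - 1) \<le> w*w" by (simp add: algebra_simps)
  moreover have "2*w*(w-1) \<le> 2*X*(w-1)" using assms by (intro mult_right_mono) auto
  ultimately have "2*w*(w-1) \<le> w*w" by simp
  hence "w*w \<le> 2*w" by (simp add: algebra_simps)
  hence "w * w \<le> 2 * w" .
  moreover have "3 * w \<le> w * w" using assms(1) by (intro mult_right_mono) auto
  ultimately show False using assms(1) by simp
qed

lemma inbox_simp: "inbox l (x, y) \<longleftrightarrow> 0 \<le> x \<and> x \<le> l \<and> 0 \<le> y \<and> y \<le> l"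
  by (simp add: inbox_def)

lemma comb_w1:
  assumes fin: "finite V" and sb: "\<forall>v\<in>V. 0 \<le> snd v \<and> snd v \<le> 1"
    and p: "p \<in> V" "snd p = 0" and q: "q \<in> V" "snd q = 1" and W: "WID V 1"
  shows "COMB V"
proof -
  define B0 where "B0 = {v\<in>V. snd v = 0}"
  define B1 where "B1 = {v\<in>V. snd v = 1}"
  have f0: "finite B0" "p \<in> B0" using fin p unfolding B0_def by auto
  have f1: "finite B1" "q \<in> B1" using fin q unfolding B1_def by auto
  obtain A where A: "A \<in> B0" "\<forall>v\<in>B0. fst A \<le> fst v" using ex_min[OF f0] by blast
  obtain Bp where Bp: "Bp \<in> B0" "\<forall>v\<in>B0. fst v \<le> fst Bp" using ex_max[OF f0] by blast
  obtain C where C: "C \<in> B1" "\<forall>v\<in>B1. fst C \<le> fst v" using ex_min[OF f1] by blast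
  obtain Dq where Dq: "Dq \<in> B1" "\<forall>v\<in>B1. fst v \<le> fst Dq" using ex_max[OF f1] by blast
  define a where "a = fst A"
  define b where "b = fst Bp"
  define c where "c = fst C"
  define d where "d = fst Dq"
  have eA: "A = (a, 0)" using A unfolding a_def B0_def by (cases A) auto
  have eB: "Bp = (b, 0)" using Bp unfolding b_def B0_def by (cases Bp) auto
  have eC: "C = (c, 1)" using C unfolding c_def B1_def by (cases C) auto
  have eD: "Dq = (d, 1)" using Dq unfolding d_def B1_def by (cases Dq) auto
  have inV: "A \<in> V" "Bp \<in> V" "C \<in> V" "Dq \<in> V" using A Bp C Dq unfolding B0_def B1_def by auto
  have cases01: "\<And>v. v \<in> V \<Longrightarrow> (snd v = 0 \<and> a \<le> fst v \<and> fst v \<le> b) \<or> (snd v = 1 \<and> c \<le> fst v \<and> fst v \<le> d)"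
  proof -
    fix v assume v: "v \<in> V"
    have "snd v = 0 \<or> snd v = 1" using sb v by force
    thus "?thesis v"
    proof
      assume "snd v = 0" hence "v \<in> B0" using v unfolding B0_def by auto
      thus ?thesis using A Bp \<open>snd v = 0\<close> unfolding a_def b_def by auto
    next
      assume "snd v = 1" hence "v \<in> B1" using v unfolding B1_def by auto
      thus ?thesis using C Dq \<open>snd v = 1\<close> unfolding c_def d_def by auto
    qed
  qed
  have ab: "a \<le> b" using A Bp f0 unfolding a_def b_def by auto
  have cd: "c \<le> d" using C Dq f1 unfolding c_def d_def by auto
  have phi: "aff 1 (a - c) 0 1 (-a) 0 v = (fst v + (a - c) * snd v - a, snd v)" for v
    by (simp add: aff_def)
  have u1: "unimod 1 (a - c) 0 1" by (simp add: unimod_def)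
  consider (gen) "a < b" "c < d" | (ta) "a = b" | (tc) "c = d" using ab cd by linarith
  then show ?thesis
  proof cases
    case gen
    define l where "l = max (b - a) (d - c)"
    have "BOXP V l" unfolding BOXP_def
    proof (intro exI conjI ballI)
      show "unimod 1 (a - c) 0 1" by (rule u1)
      fix v assume "v \<in> V"
      thus "inbox l (aff 1 (a - c) 0 1 (-a) 0 v)" using cases01[of v] gen
        unfolding phi inbox_simp l_def by auto
    qed
    moreover have "ALTA V l"
    proof -
      have "DD Bp C A - DD Bp C Dq > l" unfolding eA eB eC eD DD_def l_def using gen by auto
      thus ?thesis unfolding ALTA_def using inV by blast
    qed
    moreover have "l \<ge> 0" unfolding l_def using gen by auto
    ultimately show ?thesis unfolding COMB_def by blast
  next
    case ta
    have cd': "c < d"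
    proof (rule ccontr)
      assume "\<not> c < d" hence cdd: "c = d" using cd by simp
      have "(1::int, a - c) \<noteq> (0,0)" by simp
      then obtain u v where uv: "u \<in> V" "v \<in> V" "1*(fst u - fst v) + (a - c)*(snd u - snd v) \<ge> 1"
        using W unfolding WID_def by blast
      have "fst x + (a - c) * snd x = a" if "x \<in> V" for x
        using cases01[OF that] ta cdd by auto
      hence e: "fst u + (a - c) * snd u = a" "fst v + (a - c) * snd v = a" using uv(1,2) by auto
      have "1*(fst u - fst v) + (a - c)*(snd u - snd v) = (fst u + (a - c) * snd u) - (fst v + (a - c) * snd v)"
        by (simp add: algebra_simps)
      hence "1*(fst u - fst v) + (a - c)*(snd u - snd v) = 0" using e by simp
      thus False using uv(3) by simp
    qed
    define l where "l = d - c"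
    have l1: "l \<ge> 1" using cd' unfolding l_def by simp
    have "BOXP V l" unfolding BOXP_def
    proof (intro exI conjI ballI)
      show "unimod 1 (a - c) 0 1" by (rule u1)
      fix v assume "v \<in> V"
      thus "inbox l (aff 1 (a - c) 0 1 (-a) 0 v)" using cases01[of v] ta l1
        unfolding phi inbox_simp l_def by auto
    qed
    moreover have "ALTB V l" unfolding ALTB_def
    proof (intro conjI exI)
      show "1 \<le> l" by (rule l1)
      show "unimod 1 (a - c) 0 (-1)" by (simp add: unimod_def)
      have h: "aff 1 (a - c) 0 (-1) c 1 (x, y) = (x + (a - c) * y + c, 1 - y)" for x y
        by (simp add: aff_def)
      show "TRI V l (aff 1 (a - c) 0 (-1) c 1)" unfolding TRI_def h
      proof (intro conjI ballI)
        show "(0 + (a - c) * 0 + c, 1 - 0) \<in> V" using inV eC by simp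
        show "(l + (a - c) * 0 + c, 1 - 0) \<in> V" using inV eD l_def by simp
        show "(0 + (a - c) * 1 + c, 1 - 1) \<in> V" using inV eA by simp
        fix v assume v: "v \<in> V"
        show "v = (0 + (a - c) * 1 + c, 1 - 1) \<or> (\<exists>x\<ge>0. x \<le> l \<and> v = (x + (a - c) * 0 + c, 1 - 0))"
        proof (cases "snd v = 0")
          case True thus ?thesis using cases01[OF v] ta by (cases v) auto
        next
          case False
          hence "snd v = 1 \<and> c \<le> fst v \<and> fst v \<le> d" using cases01[OF v] by auto
          hence "v = (fst v - c + (a - c) * 0 + c, 1 - 0)" "0 \<le> fst v - c" "fst v - c \<le> l"
            unfolding l_def by (cases v; auto)+
          thus ?thesis by blast
        qed
      qed
    qed
    moreover have "l \<ge> 0" using l1 by simp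
    ultimately show ?thesis unfolding COMB_def by blast
  next
    case tc
    have ab': "a < b"
    proof (rule ccontr)
      assume "\<not> a < b" hence abb: "a = b" using ab by simp
      have "(1::int, a - c) \<noteq> (0,0)" by simp
      then obtain u v where uv: "u \<in> V" "v \<in> V" "1*(fst u - fst v) + (a - c)*(snd u - snd v) \<ge> 1"
        using W unfolding WID_def by blast
      have "fst x + (a - c) * snd x = a" if "x \<in> V" for x
        using cases01[OF that] tc abb by auto
      hence e: "fst u + (a - c) * snd u = a" "fst v + (a - c) * snd v = a" using uv(1,2) by auto
      have "1*(fst u - fst v) + (a - c)*(snd u - snd v) = (fst u + (a - c) * snd u) - (fst v + (a - c) * snd v)"
        by (simp add: algebra_simps)
      hence "1*(fst u - fst v) + (a - c)*(snd u - snd v) = 0" using e by simp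
      thus False using uv(3) by simp
    qed
    define l where "l = b - a"
    have l1: "l \<ge> 1" using ab' unfolding l_def by simp
    have "BOXP V l" unfolding BOXP_def
    proof (intro exI conjI ballI)
      show "unimod 1 (a - c) 0 1" by (rule u1)
      fix v assume "v \<in> V"
      thus "inbox l (aff 1 (a - c) 0 1 (-a) 0 v)" using cases01[of v] tc l1
        unfolding phi inbox_simp l_def by auto
    qed
    moreover have "ALTB V l" unfolding ALTB_def
    proof (intro conjI exI)
      show "1 \<le> l" by (rule l1)
      show "unimod 1 (c - a) 0 1" by (simp add: unimod_def)
      have h: "aff 1 (c - a) 0 1 a 0 (x, y) = (x + (c - a) * y + a, y)" for x y
        by (simp add: aff_def)
      show "TRI V l (aff 1 (c - a) 0 1 a 0)" unfolding TRI_def h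
      proof (intro conjI ballI)
        show "(0 + (c - a) * 0 + a, 0) \<in> V" using inV eA by simp
        show "(l + (c - a) * 0 + a, 0) \<in> V" using inV eB l_def by simp
        show "(0 + (c - a) * 1 + a, 1) \<in> V" using inV eC by simp
        fix v assume v: "v \<in> V"
        show "v = (0 + (c - a) * 1 + a, 1) \<or> (\<exists>x\<ge>0. x \<le> l \<and> v = (x + (c - a) * 0 + a, 0))"
        proof (cases "snd v = 1")
          case True thus ?thesis using cases01[OF v] tc by (cases v) auto
        next
          case False
          hence "snd v = 0 \<and> a \<le> fst v \<and> fst v \<le> b" using cases01[OF v] by auto
          hence "v = (fst v - a + (c - a) * 0 + a, 0)" "0 \<le> fst v - a" "fst v - a \<le> l"
            unfolding l_def by (cases v; auto)+
          thus ?thesis by blast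
        qed
      qed
    qed
    moreover have "l \<ge> 0" using l1 by simp
    ultimately show ?thesis unfolding COMB_def by blast
  qed
qed

lemma comb_w2:
  assumes fin: "finite V" and w2: "w \<ge> 2" and sb: "\<forall>v\<in>V. 0 \<le> snd v \<and> snd v \<le> w"
    and p: "p \<in> V" "snd p = 0" and q: "q \<in> V" "snd q = w"
    and sq: "\<bar>2 * (fst q - fst p)\<bar> \<le> w" and W: "WID V w"
  shows "COMB V"
proof -
  define s where "s = fst q - fst p"
  define g where "g = (\<lambda>v::ip. w * fst v - s * snd v)"
  obtain c where c: "c \<in> V" "\<forall>v\<in>V. g v \<le> g c" using ex_max[OF fin p(1)] by blast
  obtain d where d: "d \<in> V" "\<forall>v\<in>V. g d \<le> g v" using ex_min[OF fin p(1)] by blast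
  obtain r where r: "r \<in> V" "\<forall>v\<in>V. fst v \<le> fst r" using ex_max[OF fin p(1)] by blast
  obtain lf where lf: "lf \<in> V" "\<forall>v\<in>V. fst lf \<le> fst v" using ex_min[OF fin p(1)] by blast
  define G where "G = g c - g d"
  define X where "X = fst r - fst lf"
  have sbr: "0 \<le> snd r \<and> snd r \<le> w" "0 \<le> snd lf \<and> snd lf \<le> w" using sb r(1) lf(1) by auto
  have sabs: "2 * \<bar>s\<bar> \<le> w" using sq unfolding s_def[symmetric] by (simp add: abs_mult)
  have F1: "w * X \<le> G + \<bar>s\<bar> * w"
  proof -
    have "w * X = (g r - g lf) + s * (snd r - snd lf)" unfolding X_def g_def by (simp add: algebra_simps)
    moreover have "g r - g lf \<le> G"
    proof -
      have "g r \<le> g c" "g d \<le> g lf" using c(2) d(2) r(1) lf(1) by auto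
      thus ?thesis unfolding G_def by linarith
    qed
    moreover have "s * (snd r - snd lf) \<le> \<bar>s\<bar> * w"
    proof -
      have "\<bar>snd r - snd lf\<bar> \<le> w" using sbr unfolding abs_le_iff by linarith
      hence "\<bar>s\<bar> * \<bar>snd r - snd lf\<bar> \<le> \<bar>s\<bar> * w" by (intro mult_left_mono) auto
      moreover have "s * (snd r - snd lf) \<le> \<bar>s\<bar> * \<bar>snd r - snd lf\<bar>"
        by (metis abs_ge_self abs_mult)
      ultimately show ?thesis by linarith
    qed
    ultimately show ?thesis by linarith
  qed
  have F2: "X \<ge> w"
  proof -
    have "(1::int, 0::int) \<noteq> (0,0)" by simp
    then obtain u v where "u \<in> V" "v \<in> V" "1*(fst u - fst v) + 0*(snd u - snd v) \<ge> w"
      using W unfolding WID_def by blast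
    moreover have "fst u \<le> fst r" "fst lf \<le> fst v" using r(2) lf(2) \<open>u \<in> V\<close> \<open>v \<in> V\<close> by auto
    ultimately show ?thesis unfolding X_def by simp
  qed
  have DDpq: "DD p q v = w * fst p - g v" for v
    unfolding DD_def g_def s_def using p(2) q(2) by (simp add: algebra_simps)
  have F3: "2 * w * X \<le> 2 * G + w * w"
  proof -
    have "2 * \<bar>s\<bar> * w \<le> w * w" using sabs w2 by (intro mult_right_mono) auto
    thus ?thesis using F1 by (simp add: algebra_simps)
  qed
  have l0: "X \<ge> 0" using F2 w2 by simp
  have box: "BOXP V X" unfolding BOXP_def
  proof (intro exI conjI ballI)
    show "unimod 1 0 0 1" by (simp add: unimod_def)
    fix v assume v: "v \<in> V"
    have "aff 1 0 0 1 (- fst lf) 0 v = (fst v - fst lf, snd v)" by (simp add: aff_def)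
    moreover have "fst v \<le> fst r" "fst lf \<le> fst v" "0 \<le> snd v" "snd v \<le> w" using r(2) lf(2) sb v by auto
    ultimately show "inbox X (aff 1 0 0 1 (- fst lf) 0 v)"
      using F2 unfolding X_def by (simp add: inbox_simp)
  qed
  have "ALTA V X"
  proof (cases "w \<ge> 3 \<or> G \<ge> 3")
    case True
    have GX: "G > X"
    proof (cases "w \<ge> 3")
      case True thus ?thesis using arith1 F2 F3 by blast
    next
      case False hence "w = 2" "G \<ge> 3" using w2 \<open>w \<ge> 3 \<or> G \<ge> 3\<close> by auto
      thus ?thesis using F3 by simp
    qed
    have "DD p q d - DD p q c = G" unfolding DDpq G_def by simp
    hence "DD p q d - DD p q c > X" using GX by simp
    thus ?thesis unfolding ALTA_def using p(1) q(1) c(1) d(1) by blast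
  next
    case False
    hence w: "w = 2" and G2: "G \<le> 2" using w2 by auto
    have "2 * X \<le> G + 2 * \<bar>s\<bar>" using F1 w by simp
    hence s1: "\<bar>s\<bar> = 1" and X2: "X = 2" using G2 F2 sabs w by auto
    have grl: "g r - g lf \<le> 2"
    proof -
      have "g r \<le> g c" "g d \<le> g lf" using c(2) d(2) r(1) lf(1) by auto
      thus ?thesis using G2 unfolding G_def by linarith
    qed
    have rl: "\<bar>snd r - snd lf\<bar> \<le> 2" using sbr w unfolding abs_le_iff by linarith
    have "(1::int, -s) \<noteq> (0,0)" by simp
    then obtain u1 u2 where u: "u1 \<in> V" "u2 \<in> V" "1*(fst u1 - fst u2) + (-s)*(snd u1 - snd u2) \<ge> 2"
      using W w unfolding WID_def by blast
    have "s = 1 \<or> s = -1" using s1 by auto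
    thus ?thesis
    proof
      assume s: "s = 1"
      have "snd r - snd lf = 2" using grl rl X2 s w unfolding g_def X_def by (simp add: abs_le_iff algebra_simps)
      hence "DD lf r u2 - DD lf r u1 > X" using u(3) X2 s unfolding DD_def X_def by (simp add: algebra_simps)
      thus ?thesis unfolding ALTA_def using u lf r by blast
    next
      assume s: "s = -1"
      have h2: "snd r - snd lf = -2" using grl rl X2 s w unfolding g_def X_def by (simp add: abs_le_iff algebra_simps)
      have h1: "fst r - fst lf = 2" using X2 unfolding X_def .
      have "DD lf r u1 - DD lf r u2 = 2 * ((fst u1 - fst u2) + (snd u1 - snd u2))"
        unfolding DD_def h1 h2 by (simp add: algebra_simps)
      hence "DD lf r u1 - DD lf r u2 > X" using u(3) X2 s by simp
      thus ?thesis unfolding ALTA_def using u lf r by blast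
    qed
  qed
  thus ?thesis unfolding COMB_def using box l0 by blast
qed

lemma WID_aff:
  assumes u: "unimod A B C D" and W: "WID V w"
  shows "WID (aff A B C D E F ` V) w"
  unfolding WID_def
proof (intro allI impI)
  fix a b :: int assume ab: "(a, b) \<noteq> (0, 0)"
  define a' where "a' = a*A + b*C"
  define b' where "b' = a*B + b*D"
  have dn: "A*D - B*C \<noteq> 0" using u unfolding unimod_def by auto
  have "(a', b') \<noteq> (0,0)"
  proof
    assume "(a', b') = (0,0)" hence z: "a' = 0" "b' = 0" by auto
    have "a * (A*D - B*C) = D*a' - C*b'" unfolding a'_def b'_def by (simp add: algebra_simps)
    hence "a = 0" using z dn by simp
    moreover have "b * (A*D - B*C) = A*b' - B*a'" unfolding a'_def b'_def by (simp add: algebra_simps)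
    hence "b = 0" using z dn by simp
    ultimately show False using ab by simp
  qed
  then obtain x y where xy: "x \<in> V" "y \<in> V" "a'*(fst x - fst y) + b'*(snd x - snd y) \<ge> w"
    using W unfolding WID_def by blast
  have "a*(fst (aff A B C D E F x) - fst (aff A B C D E F y)) + b*(snd (aff A B C D E F x) - snd (aff A B C D E F y))
        = a'*(fst x - fst y) + b'*(snd x - snd y)"
    unfolding a'_def b'_def aff_def by (simp add: algebra_simps)
  thus "\<exists>u\<in>aff A B C D E F ` V. \<exists>v\<in>aff A B C D E F ` V. w \<le> a * (fst u - fst v) + b * (snd u - snd v)"
    using xy by force
qed

lemma shear_bound:
  fixes s0 W :: int assumes "W \<ge> 1"
  shows "\<bar>2 * (s0 + (- ((2 * s0 + W) div (2*W))) * W)\<bar> \<le> W"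
proof -
  define t where "t = 2 * s0 + W"
  define Q where "Q = t div (2*W)"
  define R where "R = t mod (2*W)"
  have tq: "t = 2*W*Q + R" unfolding Q_def R_def by simp
  have R: "0 \<le> R" "R < 2*W" unfolding R_def using assms by auto
  have "2 * (s0 + (- Q) * W) = R - W" using tq unfolding t_def by (simp add: algebra_simps)
  thus ?thesis using R unfolding Q_def t_def by simp
qed

lemma comb_all:
  assumes fin: "finite V" and ne: "V \<noteq> {}"
    and ND: "\<forall>a b. (a,b) \<noteq> (0,0) \<longrightarrow> (\<exists>u\<in>V. \<exists>v\<in>V. a*(fst u - fst v) + b*(snd u - snd v) \<noteq> 0)"
  shows "COMB V"
proof -
  obtain z where z: "z \<in> V" using ne by auto
  define S where "S = {n::nat. \<exists>a b. (a,b) \<noteq> (0::int,0::int) \<and> (\<forall>u\<in>V. \<forall>v\<in>V. a*(fst u - fst v) + b*(snd u - snd v) \<le> int n)}"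
  obtain r where r: "r \<in> V" "\<forall>v\<in>V. fst v \<le> fst r" using ex_max[OF fin z] by blast
  obtain lf where lf: "lf \<in> V" "\<forall>v\<in>V. fst lf \<le> fst v" using ex_min[OF fin z] by blast
  have "nat (fst r - fst lf) \<in> S" unfolding S_def
  proof (intro CollectI exI conjI ballI)
    show "(1::int, 0::int) \<noteq> (0,0)" by simp
    fix u v assume "u \<in> V" "v \<in> V"
    thus "1*(fst u - fst v) + 0*(snd u - snd v) \<le> int (nat (fst r - fst lf))" using r lf by fastforce
  qed
  define w where "w = (LEAST n. n \<in> S)"
  have wS: "w \<in> S" unfolding w_def by (rule LeastI) fact
  then obtain a0 b0 where ab0: "(a0, b0) \<noteq> (0,0)" and bd: "\<forall>u\<in>V. \<forall>v\<in>V. a0*(fst u - fst v) + b0*(snd u - snd v) \<le> int w"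
    unfolding S_def by blast
  have WV: "WID V (int w)" unfolding WID_def
  proof (intro allI impI)
    fix a b :: int assume ab: "(a,b) \<noteq> (0,0)"
    show "\<exists>u\<in>V. \<exists>v\<in>V. int w \<le> a * (fst u - fst v) + b * (snd u - snd v)"
    proof (rule ccontr)
      assume "\<not> ?thesis"
      hence lt: "\<forall>u\<in>V. \<forall>v\<in>V. a * (fst u - fst v) + b * (snd u - snd v) \<le> int w - 1" by force
      have "0 \<le> int w - 1" using lt z by force
      hence "nat (int w - 1) \<in> S" unfolding S_def using ab lt by force
      hence "w \<le> nat (int w - 1)" unfolding w_def by (rule Least_le)
      thus False using \<open>0 \<le> int w - 1\<close> by simp
    qed
  qed
  have w1: "int w \<ge> 1"
  proof -
    obtain u v where uv: "u \<in> V" "v \<in> V" "a0*(fst u - fst v) + b0*(snd u - snd v) \<noteq> 0" using ND ab0 by blast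
    have "a0*(fst v - fst u) + b0*(snd v - snd u) = - (a0*(fst u - fst v) + b0*(snd u - snd v))"
      by (simp add: algebra_simps)
    moreover have "a0*(fst u - fst v) + b0*(snd u - snd v) \<le> int w" "a0*(fst v - fst u) + b0*(snd v - snd u) \<le> int w"
      using bd uv(1,2) by auto
    ultimately show ?thesis using uv(3) by linarith
  qed
  define W where "W = int w"
  have g1: "gcd a0 b0 = 1"
  proof (rule ccontr)
    assume gn: "gcd a0 b0 \<noteq> 1"
    define g where "g = gcd a0 b0"
    have gp: "g > 0" using ab0 unfolding g_def by auto
    hence g2: "g \<ge> 2" using gn unfolding g_def by linarith
    obtain a1 where a1: "a0 = g * a1" unfolding g_def by (metis gcd_dvd1 dvdE)
    obtain b1 where b1: "b0 = g * b1" unfolding g_def by (metis gcd_dvd2 dvdE)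
    have "(a1, b1) \<noteq> (0,0)" using ab0 a1 b1 by auto
    then obtain u v where uv: "u \<in> V" "v \<in> V" "a1*(fst u - fst v) + b1*(snd u - snd v) \<ge> W"
      using WV unfolding WID_def W_def by blast
    define x where "x = a1*(fst u - fst v) + b1*(snd u - snd v)"
    have "a0*(fst u - fst v) + b0*(snd u - snd v) = g * x" unfolding a1 b1 x_def by (simp add: algebra_simps)
    hence "g * x \<le> W" using bd uv unfolding W_def by force
    moreover have xW: "x \<ge> W" using uv(3) unfolding x_def .
    moreover have "2 * x \<le> g * x" using g2 xW w1 unfolding W_def by (intro mult_right_mono) auto
    ultimately show False using w1 unfolding W_def by linarith
  qed
  obtain x0 y0 where bz: "x0 * a0 + y0 * b0 = 1" using bezout_int[of a0 b0] g1 by auto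
  define F where "F = (\<lambda>v::ip. a0 * fst v + b0 * snd v)"
  obtain pm where pm: "pm \<in> V" "\<forall>v\<in>V. F pm \<le> F v" using ex_min[OF fin z] by blast
  obtain pM where pM: "pM \<in> V" "\<forall>v\<in>V. F v \<le> F pM" using ex_max[OF fin z] by blast
  have Fb: "F u - F v \<le> W" if "u \<in> V" "v \<in> V" for u v
    using bd that unfolding F_def W_def by (force simp: algebra_simps)
  have FM: "F pM - F pm = W"
  proof -
    obtain u v where uv: "u \<in> V" "v \<in> V" "a0*(fst u - fst v) + b0*(snd u - snd v) \<ge> W"
      using WV ab0 unfolding WID_def W_def by blast
    have "F u - F v \<ge> W" using uv(3) unfolding F_def by (simp add: algebra_simps)
    moreover have "F u \<le> F pM" "F pm \<le> F v" using pM pm uv by auto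
    ultimately show ?thesis using Fb[OF pM(1) pm(1)] by linarith
  qed
  define h1 where "h1 = aff y0 (-x0) a0 b0 0 (- F pm)"
  have u1: "unimod y0 (-x0) a0 b0" unfolding unimod_def using bz by (simp add: algebra_simps)
  have h1s: "snd (h1 v) = F v - F pm" for v unfolding h1_def aff_def F_def by simp
  define V1 where "V1 = h1 ` V"
  have fin1: "finite V1" unfolding V1_def using fin by simp
  have W1: "WID V1 W" unfolding V1_def h1_def W_def by (rule WID_aff[OF u1 WV])
  have sb1: "\<forall>v\<in>V1. 0 \<le> snd v \<and> snd v \<le> W" unfolding V1_def using h1s pm Fb[OF _ pm(1)] by auto
  define p1 where "p1 = h1 pm"
  define q1 where "q1 = h1 pM"
  have p1: "p1 \<in> V1" "snd p1 = 0" unfolding p1_def V1_def using pm h1s by auto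
  have q1: "q1 \<in> V1" "snd q1 = W" unfolding q1_def V1_def using pM h1s FM by auto
  define k where "k = - ((2*(fst q1 - fst p1) + W) div (2*W))"
  define h2 where "h2 = aff 1 k 0 1 0 0"
  have u2: "unimod 1 k 0 1" by (simp add: unimod_def)
  have h2e: "h2 v = (fst v + k * snd v, snd v)" for v unfolding h2_def aff_def by simp
  define V2 where "V2 = h2 ` V1"
  have fin2: "finite V2" unfolding V2_def using fin1 by simp
  have W2: "WID V2 W" unfolding V2_def h2_def by (rule WID_aff[OF u2 W1])
  have sb2: "\<forall>v\<in>V2. 0 \<le> snd v \<and> snd v \<le> W" unfolding V2_def using sb1 h2e by auto
  have p2a: "h2 p1 \<in> V2" unfolding V2_def using p1(1) by (rule imageI)
  have p2b: "snd (h2 p1) = 0" using p1(2) h2e by simp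
  note p2 = p2a p2b
  have q2a: "h2 q1 \<in> V2" unfolding V2_def using q1(1) by (rule imageI)
  have q2b: "snd (h2 q1) = W" using q1(2) h2e by simp
  note q2 = q2a q2b
  have "fst (h2 q1) - fst (h2 p1) = fst q1 - fst p1 + k * W" using h2e p1 q1 by (simp add: algebra_simps)
  hence sq2: "\<bar>2 * (fst (h2 q1) - fst (h2 p1))\<bar> \<le> W"
    unfolding k_def using shear_bound[of W "fst q1 - fst p1"] w1 W_def by simp
  have C2: "COMB V2"
  proof (cases "W = 1")
    case True
    show ?thesis by (rule comb_w1[OF fin2 _ p2 _ _ ]) (use sb2 q2 W2 True in auto)
  next
    case False
    hence "W \<ge> 2" using w1 W_def by simp
    thus ?thesis by (rule comb_w2[OF fin2 _ sb2 p2 q2 sq2 W2])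
  qed
  have "COMB V1" using C2 unfolding V2_def h2_def by (rule COMB_inv[OF u2[unfolded unimod_def]])
  thus "COMB V" unfolding V1_def h1_def by (rule COMB_inv[OF u1[unfolded unimod_def]])
qed

definition emb :: "ip \<Rightarrow> real \<times> real" where
  "emb p = (of_int (fst p), of_int (snd p))"

lemma aff_map_emb: "aff_map a b c d e f (emb v) = emb (aff a b c d e f v)"
  by (simp add: aff_map_def aff_def emb_def)

lemma aff_map_hull: "aff_map a b c d e f ` (convex hull S) = convex hull (aff_map a b c d e f ` S)"
proof -
  define L where "L = (\<lambda>p::real\<times>real. (of_int a * fst p + of_int b * snd p, of_int c * fst p + of_int d * snd p))"
  have lin: "linear L" unfolding L_def
    by (rule linearI) (auto simp: algebra_simps)
  have eq: "aff_map a b c d e f = (\<lambda>p. (of_int e, of_int f) + L p)"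
    by (rule ext) (simp add: aff_map_def L_def)
  have "aff_map a b c d e f ` X = (+) (of_int e, of_int f) ` (L ` X)" for X
    unfolding eq by (simp add: image_image)
  thus ?thesis
    by (simp add: convex_hull_linear_image[OF lin] convex_hull_translation)
qed

lemma aff_map_inv:
  assumes "\<bar>a*d - b*c\<bar> = 1"
  defines "t \<equiv> a*d - b*c"
  shows "aff_map (t*d) (-t*b) (-t*c) (t*a) (t*(b*f - d*e)) (t*(c*e - a*f)) (aff_map a b c d e f p) = p"
proof -
  have tti: "t * t = 1" using abs1_cases[OF assms(1)] by (auto simp: t_def)
  have tt: "real_of_int t * real_of_int t = 1" by (metis tti of_int_mult of_int_1)
  have t': "real_of_int t = of_int a * of_int d - of_int b * of_int c" by (simp add: t_def)
  have "real_of_int (t*d) * (of_int a * fst p + of_int b * snd p + of_int e) + real_of_int (-t*b) * (of_int c * fst p + of_int d * snd p + of_int f) + real_of_int (t*(b*f - d*e))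
        = (real_of_int t * real_of_int t) * fst p"
    by (simp add: t' algebra_simps)
  moreover have "real_of_int (-t*c) * (of_int a * fst p + of_int b * snd p + of_int e) + real_of_int (t*a) * (of_int c * fst p + of_int d * snd p + of_int f) + real_of_int (t*(c*e - a*f))
        = (real_of_int t * real_of_int t) * snd p"
    by (simp add: t' algebra_simps)
  ultimately show ?thesis using tt by (simp add: aff_map_def prod_eq_iff)
qed

lemma area_img:
  assumes "\<bar>a*d - b*c\<bar> = 1" "h \<ge> 0"
  shows "measure lborel (aff_map a b c d e f ` (convex hull {(0,0), (h,0), (0,1)})) = h / 2"
proof -
  have "aff_map a b c d e f ` (convex hull {(0,0), (h,0), (0,1)}) =
        convex hull {aff_map a b c d e f (0,0), aff_map a b c d e f (h,0), aff_map a b c d e f (0,1)}"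
    by (simp add: aff_map_hull)
  moreover have "det2 (aff_map a b c d e f (h,0) - aff_map a b c d e f (0,0)) (aff_map a b c d e f (0,1) - aff_map a b c d e f (0,0))
     = h * of_int (a*d - b*c)"
    by (simp add: det2_def aff_map_def algebra_simps)
  moreover have "\<bar>h * of_int (a*d - b*c)\<bar> = h"
  proof -
    have r: "\<bar>real_of_int (a*d - b*c)\<bar> = 1" by (metis assms(1) of_int_abs of_int_1)
    show ?thesis by (simp only: abs_mult r) (simp add: assms(2))
  qed
  ultimately show ?thesis by (simp add: area_triangle)
qed

lemma floor_Int: "x \<in> \<int> \<Longrightarrow> real_of_int \<lfloor>x\<rfloor> = x"
  by (metis Ints_cases floor_of_int)

lemma convex_sq: "convex (scaled_square l)"
proof -
  have "scaled_square l = {p. (1,0) \<bullet> p \<ge> (0::real)} \<inter> {p. (1,0) \<bullet> p \<le> l} \<inter> {p. (0,1) \<bullet> p \<ge> (0::real)} \<inter> {p. (0,1) \<bullet> p \<le> l}"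
    by (auto simp: scaled_square_def inner_prod_def)
  thus ?thesis by (simp add: convex_Int convex_halfspace_ge convex_halfspace_le)
qed

lemma det2_emb: "det2 (emb q - emb p) (emb v - emb p) = real_of_int (DD p q v)"
  by (simp add: det2_def emb_def DD_def)

lemma LE:
  assumes "lattice_equivalent P (convex hull {(0,0), (h,0), (0,1)})" "h \<ge> 0"
  shows "measure lborel P = h / 2"
proof -
  obtain a b c d e f where det: "\<bar>a*d - b*c\<bar> = 1" and img: "aff_map a b c d e f ` P = convex hull {(0,0), (h,0), (0,1)}"
    using assms(1) unfolding lattice_equivalent_def affine_unimodular_def by blast
  define t where "t = a*d - b*c"
  let ?g = "aff_map (t*d) (-t*b) (-t*c) (t*a) (t*(b*f - d*e)) (t*(c*e - a*f))"
  have gi: "?g (aff_map a b c d e f p) = p" for p unfolding t_def by (rule aff_map_inv[OF det])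
  have "P = ?g ` (aff_map a b c d e f ` P)" by (simp only: image_image gi image_ident)
  also have "\<dots> = ?g ` (convex hull {(0,0), (h,0), (0,1)})" using img by simp
  finally have "P = ?g ` (convex hull {(0,0), (h,0), (0,1)})" .
  moreover have "\<bar>(t*d)*(t*a) - (-t*b)*(-t*c)\<bar> = 1" unfolding t_def by (rule aff_inv(2)[OF det])
  ultimately show ?thesis using area_img assms(2) by metis
qed

theorem mainTheorem5:
  fixes P :: "(real \<times> real) set"
  assumes "lattice_polygon P"
    and "area P \<noteq> 0"
  shows "area P \<ge> ls_square P / 2 \<and>
         (area P = ls_square P / 2 \<longleftrightarrow>
            lattice_equivalent P (convex hull {(0, 0), (ls_square P, 0), (0, 1)}))"
proof -
  from assms(1) obtain V0 where fin0: "finite V0" and lat: "\<forall>v\<in>V0. lattice_point v" and PV: "P = convex hull V0"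
    unfolding lattice_polygon_def by blast
  define Vi where "Vi = (\<lambda>p. (\<lfloor>fst p\<rfloor>, \<lfloor>snd p\<rfloor>)) ` V0"
  have V0e: "V0 = emb ` Vi"
  proof -
    have "emb (\<lfloor>fst p\<rfloor>, \<lfloor>snd p\<rfloor>) = p" if "p \<in> V0" for p
    proof -
      have i1: "fst p \<in> \<int>" and i2: "snd p \<in> \<int>" using lat that unfolding lattice_point_def by auto
      have "real_of_int \<lfloor>fst p\<rfloor> = fst p" by (rule floor_Int[OF i1])
      moreover have "real_of_int \<lfloor>snd p\<rfloor> = snd p" by (rule floor_Int[OF i2])
      ultimately show ?thesis unfolding emb_def by (simp add: prod_eq_iff)
    qed
    hence "(\<lambda>p. emb (\<lfloor>fst p\<rfloor>, \<lfloor>snd p\<rfloor>)) ` V0 = V0" by simp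
    thus ?thesis unfolding Vi_def by (simp add: image_image)
  qed
  have finVi: "finite Vi" unfolding Vi_def using fin0 by simp
  have cP: "compact P" unfolding PV using fin0 by (rule finite_imp_compact_convex_hull)
  have vP: "convex P" unfolding PV by simp
  have embP: "emb v \<in> P" if "v \<in> Vi" for v
    unfolding PV V0e using that by (intro hull_inc) auto
  have ne: "Vi \<noteq> {}"
  proof
    assume "Vi = {}" hence "P = {}" unfolding PV V0e by simp
    thus False using assms(2) unfolding area_def by simp
  qed
  have ND: "\<forall>a b. (a,b) \<noteq> (0,0) \<longrightarrow> (\<exists>u\<in>Vi. \<exists>v\<in>Vi. a*(fst u - fst v) + b*(snd u - snd v) \<noteq> 0)"
  proof (intro allI impI, rule ccontr)
    fix a b :: int assume ab: "(a,b) \<noteq> (0,0)" and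
      nn: "\<not> (\<exists>u\<in>Vi. \<exists>v\<in>Vi. a*(fst u - fst v) + b*(snd u - snd v) \<noteq> 0)"
    obtain z where z: "z \<in> Vi" using ne by auto
    define n :: "real \<times> real" where "n = (of_int a, of_int b)"
    define k where "k = n \<bullet> emb z"
    have n0: "n \<noteq> 0" using ab unfolding n_def by (auto simp: zero_prod_def)
    have "V0 \<subseteq> {x. n \<bullet> x = k}"
    proof
      fix x assume "x \<in> V0"
      then obtain v where v: "v \<in> Vi" "x = emb v" unfolding V0e by auto
      have "a*(fst v - fst z) + b*(snd v - snd z) = 0" using nn v z by blast
      hence "real_of_int (a*(fst v - fst z) + b*(snd v - snd z)) = 0" by simp
      hence "n \<bullet> emb v = n \<bullet> emb z" unfolding n_def emb_def inner_prod_def by (simp add: algebra_simps)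
      thus "x \<in> {x. n \<bullet> x = k}" using v unfolding k_def by simp
    qed
    hence "P \<subseteq> {x. n \<bullet> x = k}" unfolding PV by (intro hull_minimal) (auto simp: convex_hyperplane)
    hence "negligible P" using negligible_hyperplane[of n k] n0 negligible_subset by blast
    hence "measure lborel P = 0" using cP by (intro null_borel) auto
    thus False using assms(2) unfolding area_def by simp
  qed
  have "COMB Vi" by (rule comb_all[OF finVi ne ND])
  then obtain l where l0: "l \<ge> 0" and box: "BOXP Vi l" and alt: "ALTA Vi l \<or> ALTB Vi l"
    unfolding COMB_def by blast
  define Lset where "Lset = {l. 0 \<le> l \<and> (\<exists>\<phi>. affine_unimodular \<phi> \<and> \<phi> ` P \<subseteq> scaled_square l)}"
  have hdef: "ls_square P = Inf Lset" unfolding ls_square_def Lset_def ..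
  have lin: "real_of_int l \<in> Lset"
  proof -
    obtain a b c d e f where u: "unimod a b c d" and ib: "\<forall>v\<in>Vi. inbox l (aff a b c d e f v)"
      using box unfolding BOXP_def by (elim exE conjE) (rule that)
    have au: "affine_unimodular (aff_map a b c d e f)"
      unfolding affine_unimodular_def using u unfolding unimod_def by blast
    have "aff_map a b c d e f ` V0 \<subseteq> scaled_square (real_of_int l)"
    proof
      fix x assume "x \<in> aff_map a b c d e f ` V0"
      then obtain v where v: "v \<in> Vi" "x = emb (aff a b c d e f v)" unfolding V0e by (auto simp: aff_map_emb)
      have "inbox l (aff a b c d e f v)" using ib v by blast
      thus "x \<in> scaled_square (real_of_int l)" using v unfolding inbox_def scaled_square_def emb_def by auto
    qed
    hence "aff_map a b c d e f ` P \<subseteq> scaled_square (real_of_int l)"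
      unfolding PV aff_map_hull by (intro hull_minimal) (auto simp: convex_sq)
    thus ?thesis unfolding Lset_def using au l0 by auto
  qed
  have hle: "ls_square P \<le> real_of_int l" unfolding hdef
    by (rule cInf_lower[OF lin]) (auto simp: Lset_def bdd_below_def)
  have h0: "ls_square P \<ge> 0" unfolding hdef
  proof (rule cInf_greatest)
    show "Lset \<noteq> {}" using lin by blast
  qed (auto simp: Lset_def)
  show ?thesis using alt
  proof
    assume "ALTA Vi l"
    then obtain p q c d where pq: "p \<in> Vi" "q \<in> Vi" "c \<in> Vi" "d \<in> Vi" and lt: "DD p q c - DD p q d > l"
      unfolding ALTA_def by blast
    obtain cM where cM: "cM \<in> Vi" "\<forall>v\<in>Vi. DD p q v \<le> DD p q cM" using ex_max[OF finVi pq(1)] by blast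
    obtain dm where dm: "dm \<in> Vi" "\<forall>v\<in>Vi. DD p q dm \<le> DD p q v" using ex_min[OF finVi pq(1)] by blast
    have pp: "DD p q p = 0" by (simp add: DD_def)
    have i1: "DD p q cM \<ge> 0" "DD p q cM \<ge> DD p q c" using cM pq pp by force+
    have i2: "DD p q dm \<le> 0" "DD p q dm \<le> DD p q d" using dm pq pp by force+
    have "measure lborel P \<ge> (det2 (emb q - emb p) (emb cM - emb p) - det2 (emb q - emb p) (emb dm - emb p)) / 2"
      by (rule area_quad[OF cP vP embP[OF pq(1)] embP[OF pq(2)] embP[OF cM(1)] embP[OF dm(1)]])
         (use i1 i2 in \<open>simp_all add: det2_emb\<close>)
    hence a1: "area P \<ge> real_of_int (DD p q cM - DD p q dm) / 2" unfolding area_def det2_emb by simp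
    have a2: "real_of_int (DD p q cM - DD p q dm) > real_of_int l" using i1 i2 lt by linarith
    define R where "R = real_of_int (DD p q cM - DD p q dm)"
    have gt: "area P > ls_square P / 2" using a1 a2 hle unfolding R_def[symmetric] by linarith
    have "\<not> lattice_equivalent P (convex hull {(0, 0), (ls_square P, 0), (0, 1)})"
      using LE[OF _ h0, of P] gt unfolding area_def by auto
    thus ?thesis using gt by auto
  next
    assume "ALTB Vi l"
    then obtain a b c d e f where l1: "l \<ge> 1" and u: "unimod a b c d" and T: "TRI Vi l (aff a b c d e f)"
      unfolding ALTB_def by (elim exE conjE) (rule that)
    have det: "\<bar>a*d - b*c\<bar> = 1" using u unfolding unimod_def .
    let ?T = "convex hull {(0::real,0::real), (real_of_int l, 0), (0, 1)}"
    let ?h = "aff a b c d e f"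
    let ?A = "emb (?h (0,0))" and ?B = "emb (?h (l,0))" and ?C = "emb (?h (0,1))"
    have img: "aff_map a b c d e f ` ?T = convex hull {?A, ?B, ?C}"
    proof -
      have "(0::real,0::real) = emb (0,0)" "(real_of_int l, 0::real) = emb (l,0)" "(0::real, 1::real) = emb (0,1)"
        by (simp_all add: emb_def)
      hence "aff_map a b c d e f ` {(0::real,0::real), (real_of_int l, 0), (0, 1)} = {?A, ?B, ?C}"
        by (simp add: aff_map_emb)
      thus ?thesis by (simp add: aff_map_hull)
    qed
    have T1: "?h (0,0) \<in> Vi" "?h (l,0) \<in> Vi" "?h (0,1) \<in> Vi"
      and T2: "\<forall>v\<in>Vi. v = ?h (0,1) \<or> (\<exists>x. 0 \<le> x \<and> x \<le> l \<and> v = ?h (x,0))"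
      using T unfolding TRI_def by blast+
    have PT: "P = aff_map a b c d e f ` ?T"
    proof
      show "aff_map a b c d e f ` ?T \<subseteq> P" unfolding img PV
        using T1 V0e by (intro hull_mono) auto
      show "P \<subseteq> aff_map a b c d e f ` ?T" unfolding img PV
      proof (rule hull_minimal)
        show "convex (convex hull {?A, ?B, ?C})" by simp
        show "V0 \<subseteq> convex hull {?A, ?B, ?C}"
        proof
          fix x assume "x \<in> V0"
          then obtain v where v: "v \<in> Vi" "x = emb v" unfolding V0e by auto
          from T2 v(1) have "v = ?h (0,1) \<or> (\<exists>y. 0 \<le> y \<and> y \<le> l \<and> v = ?h (y,0))" by blast
          thus "x \<in> convex hull {?A, ?B, ?C}"
          proof
            assume "v = ?h (0,1)" thus ?thesis using v by (simp add: hull_inc)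
          next
            assume "\<exists>y. 0 \<le> y \<and> y \<le> l \<and> v = ?h (y,0)"
            then obtain y where y: "0 \<le> y" "y \<le> l" "v = ?h (y,0)" by blast
            define u where "u = real_of_int y / real_of_int l"
            have u01: "0 \<le> u" "u \<le> 1" unfolding u_def using y l1 by (auto simp: divide_simps)
            have "emb v = (1 - u) *\<^sub>R ?A + u *\<^sub>R ?B"
              unfolding y(3) u_def using l1 by (simp add: emb_def aff_def prod_eq_iff field_simps)
            hence "x \<in> closed_segment ?A ?B" using u01 v by (auto simp: in_segment)
            moreover have "closed_segment ?A ?B \<subseteq> convex hull {?A, ?B, ?C}"
              unfolding segment_convex_hull by (rule hull_mono) auto
            ultimately show ?thesis by blast
          qed
        qed
      qed
    qed
    have areaP: "area P = real_of_int l / 2" unfolding area_def PT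
      by (rule area_img[OF det]) (use l1 in simp)
    have ge: "area P \<ge> ls_square P / 2" using areaP hle by simp
    moreover have "area P = ls_square P / 2 \<longleftrightarrow>
            lattice_equivalent P (convex hull {(0, 0), (ls_square P, 0), (0, 1)})"
    proof
      assume "area P = ls_square P / 2"
      hence hl: "ls_square P = real_of_int l" using areaP by simp
      define t where "t = a*d - b*c"
      let ?g = "aff_map (t*d) (-t*b) (-t*c) (t*a) (t*(b*f - d*e)) (t*(c*e - a*f))"
      have gi: "?g (aff_map a b c d e f p) = p" for p unfolding t_def by (rule aff_map_inv[OF det])
      have gd: "\<bar>(t*d)*(t*a) - (-t*b)*(-t*c)\<bar> = 1" unfolding t_def by (rule aff_inv(2)[OF det])
      have "?g ` P = ?T" unfolding PT by (simp only: image_image gi image_ident)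
      moreover have "affine_unimodular ?g" unfolding affine_unimodular_def using gd by blast
      ultimately show "lattice_equivalent P (convex hull {(0, 0), (ls_square P, 0), (0, 1)})"
        unfolding lattice_equivalent_def hl by blast
    next
      assume "lattice_equivalent P (convex hull {(0, 0), (ls_square P, 0), (0, 1)})"
      thus "area P = ls_square P / 2" unfolding area_def by (rule LE[OF _ h0])
    qed
    ultimately show ?thesis by blast
  qed
qed

end
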